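(* For every $\epsilon>0$ there is $\delta>0$ (depending only on $\epsilon$) such that the algorithm ParHAC run with parameter $\delta$ is a $(1+\epsilon)$-approximate average-linkage HAC algorithm: every merge it performs is of an edge whose current average-linkage weight is at least $W_{\max}/(1+\epsilon)$, where $W_{\max}$ is the maximum edge weight in the cluster graph at the time of that merge.
   Context: Setting: an undirected graph $G=(V,E,w)$ with positive edge weights. A partition of $V$ into clusters is maintained (initially singletons), together with the cluster graph $H$ whose vertices are the clusters, with an edge between clusters $X\neq Y$ iff $G$ has an edge between them, of average-linkage weight $\mathcal{W}(X,Y)=\sum_{(x,y)\in E,\,x\in X,\,y\in Y} w(x,y)/(|X||Y|)$. Merging two clusters means replacing them by their union; the size $|X|$ of a vertex of $H$ is the size of its cluster. Algorithm ParHAC$(G,\delta)$: while $H$ has edges, let $W_{\max}$ be the current maximum edge weight of $H$ and run ContractLayer with threshold $T_L=W_{\max}/(1+\delta)$. ContractLayer (one "layer-contraction phase"): while the maximum edge weight of $H$ is at least $T_L$, perform an outer round: color each non-isolated vertex of $H$ red or blue independently with probability $1/2$ each; let $G_c$ consist of the edges of $H$ of weight $\ge T_L$ joining a blue vertex $x$ to a red vertex $y$ with $|y|\ge|x|$. While $G_c$ has edges, perform an inner round: each blue vertex $b$ picks an independent uniform priority $\pi_b\in[0,1]$ and a uniformly random red neighbor $C_b$ in $G_c$ (blue vertices with no red neighbor in $G_c$ do nothing); for each red $r$, order the blue vertices proposing to $r$ by priority and select the shortest prefix whose total cluster size exceeds $\delta|r|$ (all of them if no prefix does); merge every selected blue vertex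 into its red vertex (in the sorted order), updating all edge weights of $H$ and $G_c$ exactly; then remove from $G_c$ every edge with two red endpoints or weight below $T_L$, and remove from $G_c$ every red vertex whose cluster size has grown by more than a factor $(1+\delta)$ since the start of the outer round. An algorithm is $(1+\epsilon)$-approximate if every merge is of an edge with weight at least $1/(1+\epsilon)$ times the maximum edge weight of $H$ at that moment. *)

theory Defs
  imports Complex_Main
begin

text \<open>The weighted graph is given by a weight
  function w; (x,y) is an edge iff w x y > 0 (edge weights positive, non-edges 0).\<close>

type_synonym cluster = "nat set"

definition cw :: "(nat \<Rightarrow> nat \<Rightarrow> real) \<Rightarrow> cluster \<Rightarrow> cluster \<Rightarrow> real" where
  "cw w X Y = (\<Sum>x\<in>X. \<Sum>y\<in>Y. w x y) / (real (card X) * real (card Y))"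

definition cadj :: "(nat \<Rightarrow> nat \<Rightarrow> real) \<Rightarrow> cluster set \<Rightarrow> cluster \<Rightarrow> cluster \<Rightarrow> bool" where
  "cadj w P X Y \<longleftrightarrow> X \<in> P \<and> Y \<in> P \<and> X \<noteq> Y \<and> (\<exists>x\<in>X. \<exists>y\<in>Y. 0 < w x y)"

definition has_edges :: "(nat \<Rightarrow> nat \<Rightarrow> real) \<Rightarrow> cluster set \<Rightarrow> bool" where
  "has_edges w P \<longleftrightarrow> (\<exists>X Y. cadj w P X Y)"

definition wmax :: "(nat \<Rightarrow> nat \<Rightarrow> real) \<Rightarrow> cluster set \<Rightarrow> real" where
  "wmax w P = Max {cw w X Y | X Y. cadj w P X Y}"

definition non_isolated :: "(nat \<Rightarrow> nat \<Rightarrow> real) \<Rightarrow> cluster set \<Rightarrow> cluster set" where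
  "non_isolated w P = {X \<in> P. \<exists>Y. cadj w P X Y}"

definition merge_cl :: "cluster set \<Rightarrow> cluster \<Rightarrow> cluster \<Rightarrow> cluster set" where
  "merge_cl P X Y = insert (X \<union> Y) (P - {X, Y})"

text \<open>Current cluster containing the (initial) red cluster r.\<close>
definition cur :: "cluster set \<Rightarrow> cluster \<Rightarrow> cluster" where
  "cur P r = (THE C. C \<in> P \<and> r \<subseteq> C)"

fun sel_prefix :: "real \<Rightarrow> cluster list \<Rightarrow> cluster list" where
  "sel_prefix t [] = []"
| "sel_prefix t (b # bs) =
     (if real (card b) > t then [b] else b # sel_prefix (t - real (card b)) bs)"

text \<open>Layer T: inside ContractLayer with threshold T, between outer rounds.
  Outer T R Gc: inside an outer round; R = red clusters at the start of the outer
    round (used as identities of red vertices), Gc = edges of G_c as pairs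
    (blue cluster, initial red cluster).
  Merging T R Gc q S: inside the merge step of an inner round; q r = remaining
    selected blue clusters to be merged into red r (in priority order),
    S = all blue clusters selected in this inner round.\<close>
datatype phase =
    Idle
  | Layer real
  | Outer real "cluster set" "(cluster \<times> cluster) set"
  | Merging real "cluster set" "(cluster \<times> cluster) set" "cluster \<Rightarrow> cluster list" "cluster set"

type_synonym config = "cluster set \<times> phase"

text \<open>One step of ParHAC(G, delta); label Some (b, r) means cluster b is merged
  into cluster r.  All random choices (colouring, proposals, priority orders) and
  the order in which the (parallel) merges of different red vertices are
  interleaved are nondeterministic.\<close>
inductive step :: "(nat \<Rightarrow> nat \<Rightarrow> real) \<Rightarrow> real \<Rightarrow> config \<Rightarrow> (cluster \<times> cluster) option \<Rightarrow> config \<Rightarrow> bool"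
  for w :: "nat \<Rightarrow> nat \<Rightarrow> real" and \<delta> :: real where
  start_layer:
    "has_edges w P \<Longrightarrow> step w \<delta> (P, Idle) None (P, Layer (wmax w P / (1 + \<delta>)))"
| start_outer:
    "has_edges w P \<Longrightarrow> T \<le> wmax w P \<Longrightarrow> B \<subseteq> non_isolated w P \<Longrightarrow>
     step w \<delta> (P, Layer T) None
       (P, Outer T (non_isolated w P - B)
              {(x, y). x \<in> B \<and> y \<in> non_isolated w P - B \<and> cadj w P x y \<and>
                       T \<le> cw w x y \<and> card x \<le> card y})"
| end_layer:
    "\<not> (has_edges w P \<and> T \<le> wmax w P) \<Longrightarrow> step w \<delta> (P, Layer T) None (P, Idle)"
| end_outer:
    "step w \<delta> (P, Outer T R {}) None (P, Layer T)"
| start_inner: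
    "Gc \<noteq> {} \<Longrightarrow> Prop \<subseteq> Gc \<Longrightarrow>
     (\<forall>b. (\<exists>r. (b, r) \<in> Gc) \<longrightarrow> (\<exists>!r. (b, r) \<in> Prop)) \<Longrightarrow>
     (\<forall>r. distinct (ord r) \<and> set (ord r) = {b. (b, r) \<in> Prop}) \<Longrightarrow>
     step w \<delta> (P, Outer T R Gc) None
       (P, Merging T R Gc (\<lambda>r. sel_prefix (\<delta> * real (card (cur P r))) (ord r))
             (\<Union>r. set (sel_prefix (\<delta> * real (card (cur P r))) (ord r))))"
| merge:
    "q r = b # bs \<Longrightarrow>
     step w \<delta> (P, Merging T R Gc q S) (Some (b, cur P r))
       (merge_cl P b (cur P r), Merging T R Gc (q(r := bs)) S)"
| end_inner:
    "(\<forall>r. q r = []) \<Longrightarrow>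
     step w \<delta> (P, Merging T R Gc q S) None
       (P, Outer T R {(b, r) \<in> Gc. b \<notin> S \<and> T \<le> cw w b (cur P r) \<and>
                              real (card (cur P r)) \<le> (1 + \<delta>) * real (card r)})"

definition init :: "nat set \<Rightarrow> config" where
  "init V = ((\<lambda>v. {v}) ` V, Idle)"

definition reachable :: "(nat \<Rightarrow> nat \<Rightarrow> real) \<Rightarrow> real \<Rightarrow> nat set \<Rightarrow> config \<Rightarrow> bool" where
  "reachable w \<delta> V c \<longleftrightarrow> (\<lambda>a b. \<exists>l. step w \<delta> a l b)\<^sup>*\<^sup>* (init V) c"

end

theory Submission
  imports Defs
begin


definition sw :: "(nat \<Rightarrow> nat \<Rightarrow> real) \<Rightarrow> cluster \<Rightarrow> cluster \<Rightarrow> real" where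
  "sw w X Y = (\<Sum>x\<in>X. \<Sum>y\<in>Y. w x y)"

definition part :: "nat set \<Rightarrow> cluster set \<Rightarrow> bool" where
  "part V P \<longleftrightarrow> finite V \<and> (\<forall>C\<in>P. C \<noteq> {} \<and> C \<subseteq> V) \<and> (\<forall>C\<in>P. \<forall>D\<in>P. C \<noteq> D \<longrightarrow> C \<inter> D = {})"

definition bnd :: "(nat \<Rightarrow> nat \<Rightarrow> real) \<Rightarrow> real \<Rightarrow> cluster set \<Rightarrow> bool" where
  "bnd w M P \<longleftrightarrow> (\<forall>X\<in>P. \<forall>Y\<in>P. X \<noteq> Y \<longrightarrow> cw w X Y \<le> M)"

definition ssum :: "cluster list \<Rightarrow> real" where
  "ssum xs = sum_list (map (\<lambda>b. real (card b)) xs)"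

lemma sw_nonneg: "\<forall>x y. 0 \<le> w x y \<Longrightarrow> 0 \<le> sw w X Y"
  unfolding sw_def by (simp add: sum_nonneg)

lemma sw_mono: "\<forall>x y. 0 \<le> w x y \<Longrightarrow> finite Y' \<Longrightarrow> Y \<subseteq> Y' \<Longrightarrow> sw w X Y \<le> sw w X Y'"
  unfolding sw_def by (intro sum_mono sum_mono2) auto

lemma sw_union1: "finite X \<Longrightarrow> finite Y \<Longrightarrow> X \<inter> Y = {} \<Longrightarrow> sw w (X \<union> Y) Z = sw w X Z + sw w Y Z"
  unfolding sw_def by (simp add: sum.union_disjoint)

lemma sw_union2: "finite X \<Longrightarrow> finite Y \<Longrightarrow> X \<inter> Y = {} \<Longrightarrow> sw w Z (X \<union> Y) = sw w Z X + sw w Z Y"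
  unfolding sw_def by (simp add: sum.union_disjoint sum.distrib)

lemma cw_sw: "cw w X Y = sw w X Y / (real (card X) * real (card Y))"
  unfolding cw_def sw_def by simp

lemma cw_le_iff: "finite X \<Longrightarrow> X \<noteq> {} \<Longrightarrow> finite Y \<Longrightarrow> Y \<noteq> {} \<Longrightarrow>
   cw w X Y \<le> M \<longleftrightarrow> sw w X Y \<le> M * card X * card Y"
  unfolding cw_sw by (simp add: pos_divide_le_eq card_gt_0_iff mult.assoc)

lemma cw_ge_iff: "finite X \<Longrightarrow> X \<noteq> {} \<Longrightarrow> finite Y \<Longrightarrow> Y \<noteq> {} \<Longrightarrow>
   M \<le> cw w X Y \<longleftrightarrow> M * card X * card Y \<le> sw w X Y"
  unfolding cw_sw by (simp add: pos_le_divide_eq card_gt_0_iff mult.assoc)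

lemma ssum_butlast_sel: "0 \<le> t \<Longrightarrow> ssum (butlast (sel_prefix t l)) \<le> t"
proof (induction l arbitrary: t)
  case Nil then show ?case by (simp add: ssum_def)
next
  case (Cons b bs)
  show ?case
  proof (cases "real (card b) > t")
    case True then show ?thesis using Cons by (simp add: ssum_def)
  next
    case False
    then have "ssum (butlast (sel_prefix (t - card b) bs)) \<le> t - card b" using Cons by simp
    then show ?thesis using False
      by (cases "sel_prefix (t - card b) bs") (auto simp: ssum_def)
  qed
qed

lemma sel_prefix_prefix: "\<exists>ys. l = sel_prefix t l @ ys"
  by (induction l arbitrary: t) auto

lemma ssum_nonneg: "0 \<le> ssum xs"
  unfolding ssum_def by (induction xs) auto

lemma part_finite: "part V P \<Longrightarrow> finite P"
proof -
  assume a: "part V P"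
  then have "P \<subseteq> Pow V" unfolding part_def by blast
  moreover have "finite (Pow V)" using a unfolding part_def by simp
  ultimately show ?thesis using finite_subset by blast
qed

lemma part_cl: "part V P \<Longrightarrow> C \<in> P \<Longrightarrow> finite C \<and> C \<noteq> {}"
proof -
  assume a: "part V P" "C \<in> P"
  then have "C \<subseteq> V" "finite V" "C \<noteq> {}" unfolding part_def by auto
  then show ?thesis using finite_subset by blast
qed

lemma cur_eq: "part V P \<Longrightarrow> C \<in> P \<Longrightarrow> r \<noteq> {} \<Longrightarrow> r \<subseteq> C \<Longrightarrow> cur P r = C"
proof -
  assume a: "part V P" "C \<in> P" "r \<noteq> {}" "r \<subseteq> C"
  have d: "\<forall>C\<in>P. \<forall>D\<in>P. C \<noteq> D \<longrightarrow> C \<inter> D = {}" using a(1) unfolding part_def by simp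
  have u: "D = C" if "D \<in> P \<and> r \<subseteq> D" for D
  proof (rule ccontr)
    assume "D \<noteq> C"
    then have "D \<inter> C = {}" using d that a(2) by blast
    then show False using that a(3,4) by blast
  qed
  show ?thesis unfolding cur_def
    apply (rule the_equality)
    using a(2,4) apply simp
    using u by blast
qed

lemma part_merge: "part V P \<Longrightarrow> X \<in> P \<Longrightarrow> Y \<in> P \<Longrightarrow> X \<noteq> Y \<Longrightarrow> part V (merge_cl P X Y)"
proof -
  assume a: "part V P" "X \<in> P" "Y \<in> P" "X \<noteq> Y"
  have f: "finite V" and c: "\<forall>C\<in>P. C \<noteq> {} \<and> C \<subseteq> V" and d: "\<forall>C\<in>P. \<forall>D\<in>P. C \<noteq> D \<longrightarrow> C \<inter> D = {}"
    using a(1) unfolding part_def by auto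
  have c': "\<forall>C\<in>insert (X \<union> Y) (P - {X, Y}). C \<noteq> {} \<and> C \<subseteq> V" using c a(2,3) by auto
  have d': "\<forall>C\<in>insert (X \<union> Y) (P - {X, Y}). \<forall>D\<in>insert (X \<union> Y) (P - {X, Y}). C \<noteq> D \<longrightarrow> C \<inter> D = {}"
  proof (intro ballI impI)
    fix C D assume cd: "C \<in> insert (X \<union> Y) (P - {X, Y})" "D \<in> insert (X \<union> Y) (P - {X, Y})" "C \<noteq> D"
    show "C \<inter> D = {}"
    proof (cases "C = X \<union> Y")
      case True
      then have "D \<in> P" "D \<noteq> X" "D \<noteq> Y" using cd by auto
      then have "D \<inter> X = {}" "D \<inter> Y = {}" using d a(2,3) by auto
      then show ?thesis using True by auto
    next
      case False
      then have C: "C \<in> P" "C \<noteq> X" "C \<noteq> Y" using cd by auto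
      show ?thesis
      proof (cases "D = X \<union> Y")
        case True
        then have "C \<inter> X = {}" "C \<inter> Y = {}" using d a(2,3) C by auto
        then show ?thesis using True by auto
      next
        case False
        then have "D \<in> P" using cd by auto
        then show ?thesis using d C cd(3) by auto
      qed
    qed
  qed
  show ?thesis unfolding part_def merge_cl_def using f c' d' by blast
qed

lemma sw_pos_ex: "\<forall>x y. 0 \<le> w x y \<Longrightarrow> finite X \<Longrightarrow> finite Y \<Longrightarrow> 0 < sw w X Y \<Longrightarrow> \<exists>x\<in>X. \<exists>y\<in>Y. 0 < w x y"
proof (rule ccontr)
  assume a: "\<forall>x y. 0 \<le> w x y" "0 < sw w X Y" "\<not> (\<exists>x\<in>X. \<exists>y\<in>Y. 0 < w x y)"
  then have "\<forall>x\<in>X. \<forall>y\<in>Y. w x y = 0" by (meson antisym not_less)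
  then have "sw w X Y = 0" unfolding sw_def by simp
  with a show False by simp
qed

lemma sw_zero: "\<forall>x y. 0 \<le> w x y \<Longrightarrow> \<not> (\<exists>x\<in>X. \<exists>y\<in>Y. 0 < w x y) \<Longrightarrow> sw w X Y = 0"
proof -
  assume a: "\<forall>x y. 0 \<le> w x y" "\<not> (\<exists>x\<in>X. \<exists>y\<in>Y. 0 < w x y)"
  then have "\<forall>x\<in>X. \<forall>y\<in>Y. w x y = 0" by (meson antisym not_less)
  then show "sw w X Y = 0" unfolding sw_def by simp
qed

lemma sw_pos: "\<forall>x y. 0 \<le> w x y \<Longrightarrow> finite X \<Longrightarrow> finite Y \<Longrightarrow> x \<in> X \<Longrightarrow> y \<in> Y \<Longrightarrow> 0 < w x y \<Longrightarrow> 0 < sw w X Y"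
proof -
  assume a: "\<forall>x y. 0 \<le> w x y" "finite X" "finite Y" "x \<in> X" "y \<in> Y" "0 < w x y"
  have i: "0 < (\<Sum>y'\<in>Y. w x y')" using a by (intro sum_pos2[where i=y]) auto
  have "\<forall>x'\<in>X. 0 \<le> (\<Sum>y'\<in>Y. w x' y')" using a by (simp add: sum_nonneg)
  then have "0 < (\<Sum>x'\<in>X. \<Sum>y'\<in>Y. w x' y')" using a i by (intro sum_pos2[where i=x and f="\<lambda>x'. \<Sum>y'\<in>Y. w x' y'"]) auto
  then show ?thesis unfolding sw_def .
qed

lemma cadj_cw_pos: "\<forall>x y. 0 \<le> w x y \<Longrightarrow> part V P \<Longrightarrow> cadj w P X Y \<Longrightarrow> 0 < cw w X Y"
proof -
  assume a: "\<forall>x y. 0 \<le> w x y" "part V P" "cadj w P X Y"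
  then have f: "finite X" "X \<noteq> {}" "finite Y" "Y \<noteq> {}" using part_cl unfolding cadj_def by blast+
  then have "0 < sw w X Y" using a sw_pos unfolding cadj_def by blast
  then show ?thesis unfolding cw_sw using f by (simp add: card_gt_0_iff)
qed

lemma wmax_fin: "part V P \<Longrightarrow> finite {cw w X Y | X Y. cadj w P X Y}"
proof -
  assume "part V P"
  then have "finite (P \<times> P)" using part_finite by blast
  moreover have "{cw w X Y | X Y. cadj w P X Y} \<subseteq> (\<lambda>(X,Y). cw w X Y) ` (P \<times> P)"
    unfolding cadj_def by auto
  ultimately show ?thesis using finite_surj by blast
qed

lemma le_wmax: "part V P \<Longrightarrow> cadj w P X Y \<Longrightarrow> cw w X Y \<le> wmax w P"
  unfolding wmax_def using wmax_fin by (intro Max_ge) auto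

lemma wmax_le: "part V P \<Longrightarrow> bnd w M P \<Longrightarrow> cadj w P X Y \<Longrightarrow> wmax w P \<le> M"
proof -
  assume a: "part V P" "bnd w M P" "cadj w P X Y"
  have ne: "{cw w X Y | X Y. cadj w P X Y} \<noteq> {}" using a(3) by blast
  have "\<forall>z \<in> {cw w X Y | X Y. cadj w P X Y}. z \<le> M" using a(2) unfolding bnd_def cadj_def by blast
  then show ?thesis unfolding wmax_def using wmax_fin[OF a(1)] ne by (simp add: Max_le_iff)
qed

lemma bnd_init: "\<forall>x y. 0 \<le> w x y \<Longrightarrow> part V P \<Longrightarrow> has_edges w P \<Longrightarrow> bnd w (wmax w P) P \<and> 0 < wmax w P"
proof -
  assume a: "\<forall>x y. 0 \<le> w x y" "part V P" "has_edges w P"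
  then obtain X Y where xy: "cadj w P X Y" unfolding has_edges_def by blast
  have p1: "0 < cw w X Y" using cadj_cw_pos[OF a(1) a(2) xy] .
  have p2: "cw w X Y \<le> wmax w P" using le_wmax[OF a(2) xy] .
  have pos: "0 < wmax w P" using p1 p2 by linarith
  have "cw w X Y \<le> wmax w P" if "X \<in> P" "Y \<in> P" "X \<noteq> Y" for X Y
  proof (cases "cadj w P X Y")
    case True then show ?thesis using le_wmax[OF a(2)] by blast
  next
    case False
    then have "\<not> (\<exists>x\<in>X. \<exists>y\<in>Y. 0 < w x y)" using that unfolding cadj_def by simp
    then have "sw w X Y = 0" using sw_zero[OF a(1)] by simp
    then show ?thesis using pos unfolding cw_sw by simp
  qed
  then show ?thesis using pos unfolding bnd_def by simp
qed

lemma avg_le: "finite X \<Longrightarrow> X \<noteq> {} \<Longrightarrow> finite Y \<Longrightarrow> Y \<noteq> {} \<Longrightarrow> finite Z \<Longrightarrow> Z \<noteq> {} \<Longrightarrow> X \<inter> Y = {} \<Longrightarrow>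
  cw w X Z \<le> M \<Longrightarrow> cw w Y Z \<le> M \<Longrightarrow> cw w (X \<union> Y) Z \<le> M"
proof -
  assume f: "finite X" "X \<noteq> {}" "finite Y" "Y \<noteq> {}" "finite Z" "Z \<noteq> {}" "X \<inter> Y = {}"
    and b: "cw w X Z \<le> M" "cw w Y Z \<le> M"
  have "sw w X Z \<le> M * card X * card Z" "sw w Y Z \<le> M * card Y * card Z"
    using b f cw_le_iff by blast+
  then have "sw w (X \<union> Y) Z \<le> M * card (X \<union> Y) * card Z"
    using f by (simp add: sw_union1 card_Un_disjoint algebra_simps)
  then show ?thesis using f cw_le_iff[of "X \<union> Y" Z] by simp
qed

lemma avg_le2: "finite X \<Longrightarrow> X \<noteq> {} \<Longrightarrow> finite Y \<Longrightarrow> Y \<noteq> {} \<Longrightarrow> finite Z \<Longrightarrow> Z \<noteq> {} \<Longrightarrow> X \<inter> Y = {} \<Longrightarrow>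
  cw w Z X \<le> M \<Longrightarrow> cw w Z Y \<le> M \<Longrightarrow> cw w Z (X \<union> Y) \<le> M"
proof -
  assume f: "finite X" "X \<noteq> {}" "finite Y" "Y \<noteq> {}" "finite Z" "Z \<noteq> {}" "X \<inter> Y = {}"
    and b: "cw w Z X \<le> M" "cw w Z Y \<le> M"
  have "sw w Z X \<le> M * card Z * card X" "sw w Z Y \<le> M * card Z * card Y"
    using b f cw_le_iff by blast+
  then have "sw w Z (X \<union> Y) \<le> M * card Z * card (X \<union> Y)"
    using f by (simp add: sw_union2 card_Un_disjoint algebra_simps)
  then show ?thesis using f cw_le_iff[of Z "X \<union> Y"] by simp
qed

lemma bnd_merge: "part V P \<Longrightarrow> bnd w M P \<Longrightarrow> X \<in> P \<Longrightarrow> Y \<in> P \<Longrightarrow> X \<noteq> Y \<Longrightarrow> bnd w M (merge_cl P X Y)"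
proof -
  assume a: "part V P" "bnd w M P" "X \<in> P" "Y \<in> P" "X \<noteq> Y"
  have disj: "X \<inter> Y = {}" using a unfolding part_def by blast
  have fx: "finite X" "X \<noteq> {}" "finite Y" "Y \<noteq> {}" using a part_cl by blast+
  have 1: "cw w (X \<union> Y) Z \<le> M \<and> cw w Z (X \<union> Y) \<le> M" if z: "Z \<in> P" "Z \<noteq> X" "Z \<noteq> Y" for Z
  proof -
    have fz: "finite Z" "Z \<noteq> {}" using z a part_cl by blast+
    have bb: "\<forall>X\<in>P. \<forall>Y\<in>P. X \<noteq> Y \<longrightarrow> cw w X Y \<le> M" using a(2) unfolding bnd_def by simp
    have h: "cw w X Z \<le> M" "cw w Y Z \<le> M" "cw w Z X \<le> M" "cw w Z Y \<le> M"
      using bb a(3,4) z by auto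
    show ?thesis using avg_le[OF fx fz disj h(1,2)] avg_le2[OF fx fz disj h(3,4)] by simp
  qed
  have bb: "\<forall>X\<in>P. \<forall>Y\<in>P. X \<noteq> Y \<longrightarrow> cw w X Y \<le> M" using a(2) unfolding bnd_def by simp
  show ?thesis unfolding bnd_def merge_cl_def
  proof (intro ballI impI)
    fix A B assume ab: "A \<in> insert (X \<union> Y) (P - {X, Y})" "B \<in> insert (X \<union> Y) (P - {X, Y})" "A \<noteq> B"
    show "cw w A B \<le> M"
    proof (cases "A = X \<union> Y")
      case True
      then have "B \<in> P" "B \<noteq> X" "B \<noteq> Y" using ab by auto
      then show ?thesis using 1[of B] True by simp
    next
      case False
      then have A: "A \<in> P" "A \<noteq> X" "A \<noteq> Y" using ab by auto
      show ?thesis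
      proof (cases "B = X \<union> Y")
        case True then show ?thesis using A 1[of A] by simp
      next
        case False
        then have "B \<in> P" using ab by auto
        then show ?thesis using A(1) ab(3) bb by simp
      qed
    qed
  qed
qed

definition redok :: "cluster set \<Rightarrow> cluster set \<Rightarrow> bool" where
  "redok P R \<longleftrightarrow> (\<forall>r\<in>R. r \<noteq> {} \<and> (\<exists>C\<in>P. r \<subseteq> C)) \<and> (\<forall>C\<in>P. \<forall>r\<in>R. \<forall>r'\<in>R. r \<subseteq> C \<longrightarrow> r' \<subseteq> C \<longrightarrow> r = r')"

fun inv :: "(nat \<Rightarrow> nat \<Rightarrow> real) \<Rightarrow> real \<Rightarrow> nat set \<Rightarrow> config \<Rightarrow> bool" where
  "inv w \<delta> V (P, Idle) = part V P"
| "inv w \<delta> V (P, Layer T) = (part V P \<and> 0 < T \<and> bnd w ((1+\<delta>)*T) P)"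
| "inv w \<delta> V (P, Outer T R Gc) = (part V P \<and> 0 < T \<and> bnd w ((1+\<delta>)*T) P \<and> redok P R \<and>
     (\<forall>(b,r)\<in>Gc. r \<in> R \<and> b \<in> P \<and> (\<forall>r'\<in>R. b \<inter> r' = {}) \<and> T \<le> cw w b (cur P r)))"
| "inv w \<delta> V (P, Merging (T::real) R Gc q S) = (part V P \<and> 0 < T \<and> bnd w ((1+\<delta>)*T) P \<and> redok P R \<and>
     (\<forall>(b,r)\<in>Gc. r \<in> R \<and> (\<forall>r'\<in>R. b \<inter> r' = {}) \<and> (b \<notin> S \<longrightarrow> b \<in> P)) \<and>
     (\<forall>r. \<forall>b\<in>set (q r). r \<in> R \<and> b \<in> P \<and> (\<forall>r'\<in>R. b \<inter> r' = {}) \<and> b \<in> S) \<and>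
     (\<forall>r. distinct (q r)) \<and> (\<forall>r r'. r \<noteq> r' \<longrightarrow> set (q r) \<inter> set (q r') = {}) \<and>
     (\<forall>r. q r \<noteq> [] \<longrightarrow> (\<exists>c0::real>0. (\<forall>b\<in>set (q r). T * real (card b) * c0 \<le> sw w b (cur P r)) \<and>
           card (cur P r) + ssum (butlast (q r)) \<le> (1+\<delta>) * c0)))"

lemma cur_red: "part V P \<Longrightarrow> redok P R \<Longrightarrow> r \<in> R \<Longrightarrow> cur P r \<in> P \<and> r \<subseteq> cur P r"
proof -
  assume a: "part V P" "redok P R" "r \<in> R"
  have "\<forall>r\<in>R. r \<noteq> {} \<and> (\<exists>C\<in>P. r \<subseteq> C)" using a(2) unfolding redok_def by simp
  then have "r \<noteq> {}" "\<exists>C\<in>P. r \<subseteq> C" using a(3) by auto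
  then obtain C where "C \<in> P" "r \<subseteq> C" "r \<noteq> {}" by blast
  then have "cur P r = C" using cur_eq[OF a(1)] by blast
  then show ?thesis using \<open>C \<in> P\<close> \<open>r \<subseteq> C\<close> by simp
qed

lemma sel_set: "set (sel_prefix t l) \<subseteq> set l"
proof -
  obtain ys where "l = sel_prefix t l @ ys" using sel_prefix_prefix by blast
  then have "set l = set (sel_prefix t l) \<union> set ys" by (metis set_append)
  then show ?thesis by blast
qed

lemma sel_distinct: "distinct l \<Longrightarrow> distinct (sel_prefix t l)"
proof -
  assume d: "distinct l"
  obtain ys where "l = sel_prefix t l @ ys" using sel_prefix_prefix by blast
  then have "distinct (sel_prefix t l @ ys)" using d by simp
  then show ?thesis by simp
qed


lemma merge_core:
  assumes wn: "\<forall>x y. 0 \<le> w x y" and dp: "0 < \<delta>"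
    and I: "inv w \<delta> V (P, Merging T R Gc q S)" and qr: "q r = b # bs"
  shows "cadj w P b (cur P r) \<and> T / (1+\<delta>) \<le> cw w b (cur P r) \<and> wmax w P \<le> (1+\<delta>)*T \<and>
         inv w \<delta> V (merge_cl P b (cur P r), Merging T R Gc (q(r:=bs)) S)"
proof -
  define C where "C = cur P r"
  have pt: "part V P" and T0: "0 < T" and bd: "bnd w ((1+\<delta>)*T) P" and ro: "redok P R"
    and gc: "\<forall>(b,r)\<in>Gc. r \<in> R \<and> (\<forall>r'\<in>R. b \<inter> r' = {}) \<and> (b \<notin> S \<longrightarrow> b \<in> P)"
    and ql: "\<forall>r. \<forall>b\<in>set (q r). r \<in> R \<and> b \<in> P \<and> (\<forall>r'\<in>R. b \<inter> r' = {}) \<and> b \<in> S"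
    and qd: "\<forall>r. distinct (q r)" and qdj: "\<forall>r r'. r \<noteq> r' \<longrightarrow> set (q r) \<inter> set (q r') = {}"
    and qc: "\<forall>r. q r \<noteq> [] \<longrightarrow> (\<exists>c0::real>0. (\<forall>b\<in>set (q r). T * real (card b) * c0 \<le> sw w b (cur P r)) \<and>
           card (cur P r) + ssum (butlast (q r)) \<le> (1+\<delta>) * c0)"
    using I by auto
  have rR: "r \<in> R" and bP: "b \<in> P" and bdis: "\<forall>r'\<in>R. b \<inter> r' = {}" and bS: "b \<in> S"
  proof -
    have bq: "b \<in> set (q r)" using qr by simp
    have "r \<in> R \<and> b \<in> P \<and> (\<forall>r'\<in>R. b \<inter> r' = {}) \<and> b \<in> S" using ql bq by blast
    then show "r \<in> R" "b \<in> P" "\<forall>r'\<in>R. b \<inter> r' = {}" "b \<in> S" by auto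
  qed
  have CP: "C \<in> P" and rC: "r \<subseteq> C" using cur_red[OF pt ro rR] C_def by auto
  have rne: "r \<noteq> {}" using ro rR unfolding redok_def by blast
  have bC: "b \<noteq> C" using bdis rR rC rne by blast
  have bCd: "b \<inter> C = {}" using pt bP CP bC unfolding part_def by blast
  have fb: "finite b" "b \<noteq> {}" and fC: "finite C" "C \<noteq> {}" using part_cl pt bP CP by blast+
  obtain c0 :: real where c0: "c0 > 0" and c1: "\<forall>b\<in>set (q r). T * real (card b) * c0 \<le> sw w b C"
      and c2: "card C + ssum (butlast (q r)) \<le> (1+\<delta>) * c0"
  proof -
    have "q r \<noteq> []" using qr by simp
    then have "\<exists>c0::real>0. (\<forall>b\<in>set (q r). T * real (card b) * c0 \<le> sw w b (cur P r)) \<and>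
           card (cur P r) + ssum (butlast (q r)) \<le> (1+\<delta>) * c0" using qc by blast
    then show ?thesis using that unfolding C_def by blast
  qed
  have cb: "real (card C) \<le> (1+\<delta>) * c0" using c2 ssum_nonneg[of "butlast (q r)"] by linarith
  have s1: "T * real (card b) * c0 \<le> sw w b C" using c1 qr by simp
  have cpos: "0 < real (card C)" "0 < real (card b)" using fb fC by (auto simp: card_gt_0_iff)
  have tp: "0 < T / (1+\<delta>)" using T0 dp by simp
  have nn: "0 \<le> T / (1+\<delta>) * real (card b)" using tp cpos by (intro mult_nonneg_nonneg) auto
  have "T / (1+\<delta>) * real (card b) * real (card C) \<le> T / (1+\<delta>) * real (card b) * ((1+\<delta>) * c0)"
    using mult_left_mono[OF cb nn] .
  also have "\<dots> = T * real (card b) * c0" using dp by (simp add: field_simps)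
  finally have "T / (1+\<delta>) * real (card b) * real (card C) \<le> sw w b C" using s1 by linarith
  then have wge: "T / (1+\<delta>) \<le> cw w b C" using cw_ge_iff[OF fb(1) fb(2) fC(1) fC(2)] by simp
  have "0 < cw w b C" using wge tp by linarith
  moreover have "0 < real (card b) * real (card C)" using cpos by simp
  ultimately have "0 < sw w b C" unfolding cw_sw by (simp add: zero_less_divide_iff)
  then have "\<exists>x\<in>b. \<exists>y\<in>C. 0 < w x y" using sw_pos_ex wn fb fC by blast
  then have adj: "cadj w P b C" unfolding cadj_def using bP CP bC by blast
  have wm: "wmax w P \<le> (1+\<delta>)*T" using wmax_le pt bd adj by blast
  define P' where "P' = merge_cl P b C"
  have P'e: "P' = insert (b \<union> C) (P - {b, C})" unfolding P'_def merge_cl_def by simp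
  have pt': "part V P'" using part_merge pt bP CP bC P'_def by blast
  have bd': "bnd w ((1+\<delta>)*T) P'" using bnd_merge pt bd bP CP bC P'_def by blast
  have rne_all: "\<forall>r\<in>R. r \<noteq> {}" using ro unfolding redok_def by simp
  have uniq: "\<forall>C\<in>P. \<forall>r\<in>R. \<forall>r'\<in>R. r \<subseteq> C \<longrightarrow> r' \<subseteq> C \<longrightarrow> r = r'" using ro unfolding redok_def by simp
  have bCP': "b \<union> C \<in> P'" using P'e by simp
  have curC: "cur P' r' = b \<union> C" if "r' \<in> R" "r' \<subseteq> C" for r'
  proof -
    have "r' \<noteq> {}" using rne_all that(1) by simp
    moreover have "r' \<subseteq> b \<union> C" using that(2) by blast
    ultimately show ?thesis using cur_eq[OF pt' bCP'] by simp
  qed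
  have Dnb: "cur P r' \<noteq> b" if "r' \<in> R" for r'
  proof
    assume e: "cur P r' = b"
    have "r' \<subseteq> cur P r'" using cur_red[OF pt ro that] by simp
    then have "r' \<subseteq> b" using e by simp
    moreover have "b \<inter> r' = {}" using bdis that by simp
    moreover have "r' \<noteq> {}" using rne_all that by simp
    ultimately show False by blast
  qed
  have DP': "cur P r' \<in> P'" if "r' \<in> R" "cur P r' \<noteq> C" for r'
  proof -
    have "cur P r' \<in> P" using cur_red[OF pt ro that(1)] by simp
    then show ?thesis using P'e that(2) Dnb[OF that(1)] by simp
  qed
  have curD: "cur P' r' = cur P r'" if "r' \<in> R" "cur P r' \<noteq> C" for r'
  proof -
    have "r' \<subseteq> cur P r'" using cur_red[OF pt ro that(1)] by simp
    moreover have "r' \<noteq> {}" using rne_all that(1) by simp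
    ultimately show ?thesis using cur_eq[OF pt' DP'[OF that]] by simp
  qed
  have sameC: "r' = r" if "r' \<in> R" "cur P r' = C" for r'
  proof -
    have "r' \<subseteq> C" using cur_red[OF pt ro that(1)] that(2) by simp
    then show ?thesis using uniq CP that(1) rR rC by blast
  qed
  have ro': "redok P' R"
  proof -
    have 1: "\<forall>r'\<in>R. r' \<noteq> {} \<and> (\<exists>C\<in>P'. r' \<subseteq> C)"
    proof
      fix r' assume r': "r' \<in> R"
      have "r' \<subseteq> cur P r'" using cur_red[OF pt ro r'] by simp
      have "\<exists>C\<in>P'. r' \<subseteq> C"
      proof (cases "cur P r' = C")
        case True
        then have "r' \<subseteq> b \<union> C" using \<open>r' \<subseteq> cur P r'\<close> by blast
        then show ?thesis using bCP' by blast
      next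
        case False
        then show ?thesis using DP'[OF r' False] \<open>r' \<subseteq> cur P r'\<close> by blast
      qed
      then show "r' \<noteq> {} \<and> (\<exists>C\<in>P'. r' \<subseteq> C)" using rne_all r' by simp
    qed
    have 2: "\<forall>D\<in>P'. \<forall>r1\<in>R. \<forall>r2\<in>R. r1 \<subseteq> D \<longrightarrow> r2 \<subseteq> D \<longrightarrow> r1 = r2"
    proof (intro ballI impI)
      fix D r1 r2 assume a: "D \<in> P'" "r1 \<in> R" "r2 \<in> R" "r1 \<subseteq> D" "r2 \<subseteq> D"
      show "r1 = r2"
      proof (cases "D = b \<union> C")
        case True
        have "b \<inter> r1 = {}" "b \<inter> r2 = {}" using bdis a(2,3) by auto
        then have "r1 \<subseteq> C" "r2 \<subseteq> C" using a(4,5) True by blast+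
        then show ?thesis using uniq CP a(2,3) by blast
      next
        case False
        then have "D \<in> P" using a(1) P'e by simp
        then show ?thesis using uniq a by blast
      qed
    qed
    show ?thesis unfolding redok_def using 1 2 by blast
  qed
  let ?q = "q(r := bs)"
  have qsub: "set (?q r') \<subseteq> set (q r')" for r' using qr by auto
  have notb: "b' \<noteq> b" if "b' \<in> set (?q r')" for b' r'
  proof (cases "r' = r")
    case True
    then have "b' \<in> set bs" using that by simp
    moreover have "distinct (b # bs)" using qd qr by metis
    ultimately show ?thesis by auto
  next
    case False
    then have "b' \<in> set (q r')" using that by simp
    moreover have "b \<in> set (q r)" using qr by simp
    moreover have "set (q r') \<inter> set (q r) = {}" using qdj False by blast
    ultimately show ?thesis by blast
  qed
  have gc': "\<forall>(b',r')\<in>Gc. r' \<in> R \<and> (\<forall>r''\<in>R. b' \<inter> r'' = {}) \<and> (b' \<notin> S \<longrightarrow> b' \<in> P')"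
  proof (intro ballI)
    fix x assume x: "x \<in> Gc"
    obtain b' r' where xe: "x = (b', r')" by force
    have hh: "r' \<in> R \<and> (\<forall>r''\<in>R. b' \<inter> r'' = {}) \<and> (b' \<notin> S \<longrightarrow> b' \<in> P)" using gc x xe by fastforce
    then have h: "r' \<in> R" "\<forall>r''\<in>R. b' \<inter> r'' = {}" "b' \<notin> S \<longrightarrow> b' \<in> P" by auto
    have "b' \<notin> S \<longrightarrow> b' \<in> P'"
    proof
      assume "b' \<notin> S"
      then have "b' \<in> P" "b' \<noteq> b" using h bS by auto
      moreover have "b' \<noteq> C"
      proof
        assume "b' = C"
        then have "r \<subseteq> b'" using rC by simp
        moreover have "b' \<inter> r = {}" using h(2) rR by simp
        ultimately show False using rne by blast
      qed
      ultimately show "b' \<in> P'" using P'e by simp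
    qed
    then show "case x of (b', r') \<Rightarrow> r' \<in> R \<and> (\<forall>r''\<in>R. b' \<inter> r'' = {}) \<and> (b' \<notin> S \<longrightarrow> b' \<in> P')"
      using h xe by simp
  qed
  have ql': "\<forall>r'. \<forall>b'\<in>set (?q r'). r' \<in> R \<and> b' \<in> P' \<and> (\<forall>r''\<in>R. b' \<inter> r'' = {}) \<and> b' \<in> S"
  proof (intro allI ballI)
    fix r' b' assume bq: "b' \<in> set (?q r')"
    then have h: "r' \<in> R" "b' \<in> P" "\<forall>r''\<in>R. b' \<inter> r'' = {}" "b' \<in> S" using ql qsub by blast+
    have "b' \<noteq> b" using notb bq by blast
    moreover have "b' \<noteq> C" using h rC rR rne by blast
    ultimately show "r' \<in> R \<and> b' \<in> P' \<and> (\<forall>r''\<in>R. b' \<inter> r'' = {}) \<and> b' \<in> S" using h P'e by blast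
  qed
  have qd': "\<forall>r'. distinct (?q r')"
  proof
    fix r' show "distinct (?q r')"
    proof (cases "r' = r")
      case True
      have "distinct (b # bs)" using qd qr by metis
      then show ?thesis using True by simp
    next
      case False then show ?thesis using qd by simp
    qed
  qed
  have qdj': "\<forall>r1 r2. r1 \<noteq> r2 \<longrightarrow> set (?q r1) \<inter> set (?q r2) = {}"
  proof (intro allI impI)
    fix r1 r2 :: cluster assume ne: "r1 \<noteq> r2"
    have "set (q r1) \<inter> set (q r2) = {}" using qdj ne by blast
    then show "set (?q r1) \<inter> set (?q r2) = {}" using qsub[of r1] qsub[of r2] by blast
  qed
  have qc': "\<forall>r'. ?q r' \<noteq> [] \<longrightarrow> (\<exists>c0::real>0. (\<forall>b\<in>set (?q r'). T * real (card b) * c0 \<le> sw w b (cur P' r')) \<and>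
           card (cur P' r') + ssum (butlast (?q r')) \<le> (1+\<delta>) * c0)"
  proof (intro allI impI)
    fix r' assume ne: "?q r' \<noteq> []"
    show "\<exists>c0::real>0. (\<forall>b\<in>set (?q r'). T * real (card b) * c0 \<le> sw w b (cur P' r')) \<and>
           card (cur P' r') + ssum (butlast (?q r')) \<le> (1+\<delta>) * c0"
    proof (cases "r' = r")
      case True
      then have bsne: "bs \<noteq> []" using ne by simp
      have cP': "cur P' r = b \<union> C" using curC[OF rR rC] .
      have "\<forall>b'\<in>set bs. T * real (card b') * c0 \<le> sw w b' (cur P' r)"
      proof
        fix b' assume "b' \<in> set bs"
        then have "T * real (card b') * c0 \<le> sw w b' C" using c1 qr by simp
        also have "\<dots> \<le> sw w b' (b \<union> C)" by (rule sw_mono[OF wn]) (use fb fC in auto)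
        finally show "T * real (card b') * c0 \<le> sw w b' (cur P' r)" using cP' by simp
      qed
      moreover have "card (cur P' r) + ssum (butlast bs) \<le> (1+\<delta>) * c0"
      proof -
        have "card (cur P' r) = card b + card C" using cP' fb fC bCd by (simp add: card_Un_disjoint)
        moreover have "ssum (butlast (q r)) = card b + ssum (butlast bs)" using qr bsne by (simp add: ssum_def)
        ultimately show ?thesis using c2 by simp
      qed
      ultimately show ?thesis using c0 True by auto
    next
      case False
      then have qe: "?q r' = q r'" by simp
      then have "q r' \<noteq> []" using ne by simp
      then have "\<exists>c::real>0. (\<forall>b\<in>set (q r'). T * real (card b) * c \<le> sw w b (cur P r')) \<and>
          card (cur P r') + ssum (butlast (q r')) \<le> (1+\<delta>) * c" using qc by blast
      moreover have "r' \<in> R"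
      proof -
        obtain b1 bs1 where "q r' = b1 # bs1" using \<open>q r' \<noteq> []\<close> by (cases "q r'") auto
        then have "b1 \<in> set (q r')" by simp
        then show ?thesis using ql by blast
      qed
      moreover then have "cur P r' \<noteq> C" using sameC False by blast
      ultimately show ?thesis using curD qe by simp
    qed
  qed
  have "inv w \<delta> V (P', Merging T R Gc ?q S)"
    using pt' T0 bd' ro' gc' ql' qd' qdj' qc' by simp
  then show ?thesis using adj wge wm P'_def C_def by simp
qed



lemma inv_start_outer:
  assumes I: "inv w \<delta> V (P, Layer T)" and B: "B \<subseteq> non_isolated w P"
  shows "inv w \<delta> V (P, Outer T (non_isolated w P - B)
              {(x, y). x \<in> B \<and> y \<in> non_isolated w P - B \<and> cadj w P x y \<and>
                       T \<le> cw w x y \<and> card x \<le> card y})"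
proof -
  define R where "R = non_isolated w P - B"
  have pt: "part V P" and T0: "0 < T" and bd: "bnd w ((1+\<delta>)*T) P" using I by auto
  have RP: "R \<subseteq> P" "B \<subseteq> P" using B unfolding R_def non_isolated_def by auto
  have ne: "\<forall>C\<in>P. C \<noteq> {}" and dj: "\<forall>C\<in>P. \<forall>D\<in>P. C \<noteq> D \<longrightarrow> C \<inter> D = {}"
    using pt unfolding part_def by auto
  have ro: "redok P R" unfolding redok_def
  proof (intro conjI ballI impI)
    fix r assume r: "r \<in> R"
    then show "r \<noteq> {}" using ne RP by blast
    show "\<exists>C\<in>P. r \<subseteq> C" using r RP by blast
  next
    fix C r r' assume a: "C \<in> P" "r \<in> R" "r' \<in> R" "r \<subseteq> C" "r' \<subseteq> C"
    have "r \<in> P" "r' \<in> P" "r \<noteq> {}" "r' \<noteq> {}" using a RP ne by auto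
    then have "r = C" "r' = C" using dj a by blast+
    then show "r = r'" by simp
  qed
  have gc: "\<forall>(b,r)\<in>{(x, y). x \<in> B \<and> y \<in> R \<and> cadj w P x y \<and> T \<le> cw w x y \<and> card x \<le> card y}.
        r \<in> R \<and> b \<in> P \<and> (\<forall>r'\<in>R. b \<inter> r' = {}) \<and> T \<le> cw w b (cur P r)"
  proof (intro ballI)
    fix x assume x: "x \<in> {(x, y). x \<in> B \<and> y \<in> R \<and> cadj w P x y \<and> T \<le> cw w x y \<and> card x \<le> card y}"
    obtain b r where xe: "x = (b, r)" by force
    have h: "b \<in> B" "r \<in> R" "T \<le> cw w b r" using x xe by auto
    have bP: "b \<in> P" using h RP by blast
    have "r \<in> P" "r \<noteq> {}" using h RP ne by auto
    then have cr: "cur P r = r" using cur_eq[OF pt] by simp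
    have "\<forall>r'\<in>R. b \<inter> r' = {}"
    proof
      fix r' assume r': "r' \<in> R"
      have "r' \<notin> B" using r' unfolding R_def by simp
      moreover have "r' \<in> P" using r' RP by blast
      ultimately have "b \<noteq> r'" using h by blast
      then show "b \<inter> r' = {}" using dj bP \<open>r' \<in> P\<close> by blast
    qed
    then show "case x of (b, r) \<Rightarrow> r \<in> R \<and> b \<in> P \<and> (\<forall>r'\<in>R. b \<inter> r' = {}) \<and> T \<le> cw w b (cur P r)"
      using xe h bP cr by simp
  qed
  have "inv w \<delta> V (P, Outer T R {(x, y). x \<in> B \<and> y \<in> R \<and> cadj w P x y \<and> T \<le> cw w x y \<and> card x \<le> card y})"
    unfolding inv.simps using pt T0 bd ro gc by blast
  then show ?thesis unfolding R_def .
qed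

lemma inv_start_inner:
  assumes wn: "\<forall>x y. 0 \<le> w x y" and dp: "0 < \<delta>"
    and I: "inv w \<delta> V (P, Outer T R Gc)" and sub: "Prop \<subseteq> Gc"
    and un: "\<forall>b. (\<exists>r. (b, r) \<in> Gc) \<longrightarrow> (\<exists>!r. (b, r) \<in> Prop)"
    and od: "\<forall>r. distinct (ord r) \<and> set (ord r) = {b. (b, r) \<in> Prop}"
  shows "inv w \<delta> V (P, Merging T R Gc (\<lambda>r. sel_prefix (\<delta> * real (card (cur P r))) (ord r))
             (\<Union>r. set (sel_prefix (\<delta> * real (card (cur P r))) (ord r))))"
proof -
  define q where "q = (\<lambda>r. sel_prefix (\<delta> * real (card (cur P r))) (ord r))"
  define S where "S = (\<Union>r. set (q r))"
  have pt: "part V P" and T0: "0 < T" and bd: "bnd w ((1+\<delta>)*T) P" and ro: "redok P R"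
    and gc: "\<forall>(b,r)\<in>Gc. r \<in> R \<and> b \<in> P \<and> (\<forall>r'\<in>R. b \<inter> r' = {}) \<and> T \<le> cw w b (cur P r)"
    using I by auto
  have inq: "(b, r) \<in> Gc" if "b \<in> set (q r)" for b r
  proof -
    have "b \<in> set (ord r)" using that sel_set unfolding q_def by blast
    then show ?thesis using od sub by blast
  qed
  have gc': "\<forall>(b,r)\<in>Gc. r \<in> R \<and> (\<forall>r'\<in>R. b \<inter> r' = {}) \<and> (b \<notin> S \<longrightarrow> b \<in> P)"
  proof
    fix x assume x: "x \<in> Gc"
    obtain b r where xe: "x = (b, r)" by force
    have "r \<in> R \<and> b \<in> P \<and> (\<forall>r'\<in>R. b \<inter> r' = {}) \<and> T \<le> cw w b (cur P r)" using bspec[OF gc x] unfolding xe by (simp only: prod.case) blast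
    then show "case x of (b,r) \<Rightarrow> r \<in> R \<and> (\<forall>r'\<in>R. b \<inter> r' = {}) \<and> (b \<notin> S \<longrightarrow> b \<in> P)" using xe by simp
  qed
  have ql: "\<forall>r. \<forall>b\<in>set (q r). r \<in> R \<and> b \<in> P \<and> (\<forall>r'\<in>R. b \<inter> r' = {}) \<and> b \<in> S"
  proof (intro allI ballI)
    fix r b assume bq: "b \<in> set (q r)"
    have "(b, r) \<in> Gc" using inq bq .
    then have "r \<in> R \<and> b \<in> P \<and> (\<forall>r'\<in>R. b \<inter> r' = {}) \<and> T \<le> cw w b (cur P r)"
      using bspec[OF gc \<open>(b, r) \<in> Gc\<close>] by (simp only: prod.case) blast
    then have "r \<in> R \<and> b \<in> P \<and> (\<forall>r'\<in>R. b \<inter> r' = {})" by simp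
    moreover have "b \<in> S" unfolding S_def using bq by blast
    ultimately show "r \<in> R \<and> b \<in> P \<and> (\<forall>r'\<in>R. b \<inter> r' = {}) \<and> b \<in> S" by simp
  qed
  have qd: "\<forall>r. distinct (q r)" unfolding q_def using od sel_distinct by blast
  have qdj: "\<forall>r r'. r \<noteq> r' \<longrightarrow> set (q r) \<inter> set (q r') = {}"
  proof (intro allI impI)
    fix r r' :: cluster assume ne: "r \<noteq> r'"
    show "set (q r) \<inter> set (q r') = {}"
    proof (rule ccontr)
      assume "set (q r) \<inter> set (q r') \<noteq> {}"
      then obtain b where b: "b \<in> set (q r)" "b \<in> set (q r')" by blast
      then have "b \<in> set (ord r)" "b \<in> set (ord r')" using sel_set unfolding q_def by blast+
      then have p: "(b, r) \<in> Prop" "(b, r') \<in> Prop" using od by blast+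
      then have "(b, r) \<in> Gc" using sub by blast
      then have "\<exists>!r. (b, r) \<in> Prop" using un by blast
      then show False using p ne by blast
    qed
  qed
  have qc: "\<forall>r. q r \<noteq> [] \<longrightarrow> (\<exists>c0::real>0. (\<forall>b\<in>set (q r). T * real (card b) * c0 \<le> sw w b (cur P r)) \<and>
           card (cur P r) + ssum (butlast (q r)) \<le> (1+\<delta>) * c0)"
  proof (intro allI impI)
    fix r assume ne: "q r \<noteq> []"
    obtain b1 bs1 where "q r = b1 # bs1" using ne by (cases "q r") auto
    then have "b1 \<in> set (q r)" by simp
    then have rR: "r \<in> R" using ql by blast
    have CP: "cur P r \<in> P" using cur_red[OF pt ro rR] by simp
    have fC: "finite (cur P r)" "cur P r \<noteq> {}" using part_cl[OF pt CP] by auto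
    define c0 where "c0 = real (card (cur P r))"
    have c0p: "c0 > 0" unfolding c0_def using fC by (simp add: card_gt_0_iff)
    have 1: "\<forall>b\<in>set (q r). T * real (card b) * c0 \<le> sw w b (cur P r)"
    proof
      fix b assume bq: "b \<in> set (q r)"
      then have "(b, r) \<in> Gc" using inq by blast
      then have "b \<in> P" "T \<le> cw w b (cur P r)" using gc by auto
      then have fb: "finite b" "b \<noteq> {}" using part_cl[OF pt] by auto
      have "T * real (card b) * real (card (cur P r)) \<le> sw w b (cur P r)"
        using cw_ge_iff[OF fb(1) fb(2) fC(1) fC(2)] \<open>T \<le> cw w b (cur P r)\<close> by simp
      then show "T * real (card b) * c0 \<le> sw w b (cur P r)" unfolding c0_def .
    qed
    have "ssum (butlast (q r)) \<le> \<delta> * c0" unfolding q_def c0_def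
      using ssum_butlast_sel dp by simp
    then have 2: "card (cur P r) + ssum (butlast (q r)) \<le> (1+\<delta>) * c0" unfolding c0_def
      by (simp add: algebra_simps)
    show "\<exists>c0::real>0. (\<forall>b\<in>set (q r). T * real (card b) * c0 \<le> sw w b (cur P r)) \<and>
           card (cur P r) + ssum (butlast (q r)) \<le> (1+\<delta>) * c0" using c0p 1 2 by blast
  qed
  have "inv w \<delta> V (P, Merging T R Gc q S)"
    using pt T0 bd ro gc' ql qd qdj qc by simp
  then show ?thesis unfolding q_def S_def .
qed

lemma inv_end_inner:
  assumes I: "inv w \<delta> V (P, Merging T R Gc q S)" and qe: "\<forall>r. q r = []"
  shows "inv w \<delta> V (P, Outer T R {(b, r) \<in> Gc. b \<notin> S \<and> T \<le> cw w b (cur P r) \<and>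
                              real (card (cur P r)) \<le> (1 + \<delta>) * real (card r)})"
proof -
  have pt: "part V P" and T0: "0 < T" and bd: "bnd w ((1+\<delta>)*T) P" and ro: "redok P R"
    and gc: "\<forall>(b,r)\<in>Gc. r \<in> R \<and> (\<forall>r'\<in>R. b \<inter> r' = {}) \<and> (b \<notin> S \<longrightarrow> b \<in> P)"
    using I by auto
  have "\<forall>(b,r)\<in>{(b, r) \<in> Gc. b \<notin> S \<and> T \<le> cw w b (cur P r) \<and>
                              real (card (cur P r)) \<le> (1 + \<delta>) * real (card r)}.
        r \<in> R \<and> b \<in> P \<and> (\<forall>r'\<in>R. b \<inter> r' = {}) \<and> T \<le> cw w b (cur P r)"
  proof
    fix x assume x: "x \<in> {(b, r) \<in> Gc. b \<notin> S \<and> T \<le> cw w b (cur P r) \<and>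
                              real (card (cur P r)) \<le> (1 + \<delta>) * real (card r)}"
    obtain b r where xe: "x = (b, r)" by force
    have h: "(b, r) \<in> Gc" "b \<notin> S" "T \<le> cw w b (cur P r)" using x xe by auto
    have "r \<in> R \<and> (\<forall>r'\<in>R. b \<inter> r' = {}) \<and> (b \<notin> S \<longrightarrow> b \<in> P)" using bspec[OF gc h(1)] by (simp only: prod.case) blast
    then show "case x of (b,r) \<Rightarrow> r \<in> R \<and> b \<in> P \<and> (\<forall>r'\<in>R. b \<inter> r' = {}) \<and> T \<le> cw w b (cur P r)"
      using xe h by simp
  qed
  then show ?thesis using pt T0 bd ro by simp
qed

lemma inv_step:
  assumes wn: "\<forall>x y. 0 \<le> w x y" and dp: "0 < \<delta>"
    and I: "inv w \<delta> V c" and st: "step w \<delta> c l c'"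
  shows "inv w \<delta> V c'"
  using st
proof cases
  case (start_layer P)
  then have pt: "part V P" using I by simp
  have h: "bnd w (wmax w P) P \<and> 0 < wmax w P" using bnd_init[OF wn pt start_layer(4)] .
  have e: "(1 + \<delta>) * (wmax w P / (1 + \<delta>)) = wmax w P" using dp by simp
  have "0 < wmax w P / (1 + \<delta>)" using h dp by simp
  then have "inv w \<delta> V (P, Layer (wmax w P / (1 + \<delta>)))" using pt h e by (simp only: inv.simps)
  then show ?thesis unfolding start_layer(3) .
next
  case (start_outer P T B)
  have "inv w \<delta> V (P, Layer T)" using I start_outer(1) by simp
  from inv_start_outer[OF this start_outer(6)] show ?thesis unfolding start_outer(3) .
next
  case (end_layer P T)
  have "part V P" using I end_layer(1) by simp
  then show ?thesis unfolding end_layer(3) by simp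
next
  case (end_outer P T R)
  have "inv w \<delta> V (P, Outer T R {})" using I end_outer(1) by simp
  then show ?thesis unfolding end_outer(3) by simp
next
  case (start_inner Gc Prop ord P T R)
  have "inv w \<delta> V (P, Outer T R Gc)" using I start_inner(1) by simp
  from inv_start_inner[OF wn dp this start_inner(5) start_inner(6) start_inner(7)]
  show ?thesis unfolding start_inner(3) .
next
  case (merge q r b bs P T R Gc S)
  have "inv w \<delta> V (P, Merging T R Gc q S)" using I merge(1) by simp
  from merge_core[OF wn dp this merge(4)] show ?thesis unfolding merge(3) by blast
next
  case (end_inner q P T R Gc S)
  have "inv w \<delta> V (P, Merging T R Gc q S)" using I end_inner(1) by simp
  from inv_end_inner[OF this end_inner(4)] show ?thesis unfolding end_inner(3) .
qed

lemma inv_init: "finite V \<Longrightarrow> inv w \<delta> V (init V)"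
proof -
  assume f: "finite V"
  have "\<forall>C\<in>(\<lambda>v. {v}) ` V. C \<noteq> {} \<and> C \<subseteq> V" by auto
  moreover have "\<forall>C\<in>(\<lambda>v. {v}) ` V. \<forall>D\<in>(\<lambda>v. {v}) ` V. C \<noteq> D \<longrightarrow> C \<inter> D = {}" by auto
  ultimately have "part V ((\<lambda>v. {v}) ` V)" unfolding part_def using f by blast
  then show ?thesis unfolding init_def by simp
qed

lemma inv_reach:
  assumes wn: "\<forall>x y. 0 \<le> w x y" and dp: "0 < \<delta>" and fV: "finite V"
    and r: "reachable w \<delta> V c"
  shows "inv w \<delta> V c"
proof -
  have "(\<lambda>a b. \<exists>l. step w \<delta> a l b)\<^sup>*\<^sup>* (init V) c" using r unfolding reachable_def .
  then show ?thesis
  proof (induction rule: rtranclp_induct)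
    case base then show ?case using inv_init[OF fV] .
  next
    case (step y z)
    then show ?case using inv_step[OF wn dp] by blast
  qed
qed



lemma merge_label: "step w \<delta> c (Some (X,Y)) c' \<Longrightarrow>
   \<exists>P T R Gc q S r bs. c = (P, Merging T R Gc q S) \<and> q r = X # bs \<and> Y = cur P r"
  by (cases rule: step.cases) fastforce+

lemma final_ineq:
  fixes W T K \<delta> \<epsilon> :: real
  assumes dp: "0 < \<delta>" and sq: "(1+\<delta>)^2 = 1+\<epsilon>" and a: "W \<le> (1+\<delta>)*T" and b: "T/(1+\<delta>) \<le> K"
  shows "W / (1+\<epsilon>) \<le> K"
proof -
  have p: "0 < 1+\<epsilon>" using sq dp by (metis add_pos_pos zero_less_one zero_less_power)
  have "W / (1+\<epsilon>) \<le> (1+\<delta>)*T / (1+\<epsilon>)" using a p by (simp add: divide_right_mono)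
  also have "\<dots> = (1+\<delta>)*T / ((1+\<delta>)*(1+\<delta>))" unfolding sq[symmetric] by (simp add: power2_eq_square)
  also have "\<dots> = T/(1+\<delta>)" using dp by (subst nonzero_mult_divide_mult_cancel_left) auto
  finally show ?thesis using b by linarith
qed

theorem mainTheorem4:
  shows "\<forall>\<epsilon>::real. \<epsilon> > 0 \<longrightarrow> (\<exists>\<delta>::real. \<delta> > 0 \<and>
     (\<forall>(V::nat set) (w::nat \<Rightarrow> nat \<Rightarrow> real).
        finite V \<and> (\<forall>x y. 0 \<le> w x y) \<and> (\<forall>x y. w x y = w y x) \<and> (\<forall>x. w x x = 0) \<longrightarrow>
        (\<forall>c X Y c'. reachable w \<delta> V c \<and> step w \<delta> c (Some (X, Y)) c' \<longrightarrow>
           cadj w (fst c) X Y \<and> wmax w (fst c) / (1 + \<epsilon>) \<le> cw w X Y)))"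
proof (intro allI impI)
  fix \<epsilon> :: real assume ep: "\<epsilon> > 0"
  define \<delta> where "\<delta> = sqrt (1+\<epsilon>) - 1"
  have "1 < sqrt (1+\<epsilon>)" using ep by (simp add: real_less_rsqrt)
  then have dp: "0 < \<delta>" unfolding \<delta>_def by simp
  have sq: "(1+\<delta>)^2 = 1+\<epsilon>" unfolding \<delta>_def using ep by simp
  have main: "cadj w (fst c) X Y \<and> wmax w (fst c) / (1 + \<epsilon>) \<le> cw w X Y"
    if fV: "finite V" and wn: "\<forall>x y. 0 \<le> w x y" and r: "reachable w \<delta> V c"
      and st: "step w \<delta> c (Some (X, Y)) c'" for V w c X Y c'
  proof -
    have I: "inv w \<delta> V c" using inv_reach[OF wn dp fV r] .
    obtain P T R Gc q S r bs where ce: "c = (P, Merging T R Gc q S)" and qr: "q r = X # bs" and Ye: "Y = cur P r"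
      using merge_label[OF st] by blast
    have I': "inv w \<delta> V (P, Merging T R Gc q S)" using I ce by simp
    have h: "cadj w P X (cur P r) \<and> T / (1+\<delta>) \<le> cw w X (cur P r) \<and> wmax w P \<le> (1+\<delta>)*T"
      using merge_core[OF wn dp I' qr] by blast
    then have "wmax w P / (1 + \<epsilon>) \<le> cw w X (cur P r)" using final_ineq[OF dp sq] by blast
    then show ?thesis using h ce Ye by simp
  qed
  show "\<exists>\<delta>::real. \<delta> > 0 \<and>
     (\<forall>(V::nat set) (w::nat \<Rightarrow> nat \<Rightarrow> real).
        finite V \<and> (\<forall>x y. 0 \<le> w x y) \<and> (\<forall>x y. w x y = w y x) \<and> (\<forall>x. w x x = 0) \<longrightarrow>
        (\<forall>c X Y c'. reachable w \<delta> V c \<and> step w \<delta> c (Some (X, Y)) c' \<longrightarrow>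
           cadj w (fst c) X Y \<and> wmax w (fst c) / (1 + \<epsilon>) \<le> cw w X Y))"
    using dp main by blast
qed


end
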